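(* Let $\Sigma$ be an $(m,n)$-multirate system with harmonic transfer function $\mathcal G$, let $\mathcal A:=\mathcal T_{m\overline n}(A)$, and for $z\in\rho_{m\overline n}(\mathcal A)$ denote by $G_k(z)$ the operator in row $k$ and column $0$ of the $m\times n$ block operator matrix $\mathcal G(z)$. \begin{enumerate} \item With $\epsilon:=e^{2\pi j/(m\overline n)}$, for every $z\in\rho_{m\overline n}(\mathcal A)$ the entry of $\mathcal G(z)$ in row $k$ and column $\ell$ ($0\le k<m$, $0\le \ell<n$) equals $G_{(k-\ell)\bmod m}(z/\epsilon^\ell)$. \item Suppose $\Sigma$ is also $(\widetilde m,\widetilde n)$-multirate, where $\widetilde m=\widetilde c\,\overline m$, $\widetilde n=\widetilde c\,\overline n$ with $q:=c/\widetilde c\in\mathbb Z^+$ (i.e. the operators $A_t,B_t,C_t,D_t$ are $\widetilde m\overline n$-periodic), and let $\widetilde{\mathcal G}$ be the harmonic transfer function of $\Sigma$ regarded as an $(\widetilde m,\widetilde n)$-multirate system, defined on $\rho_{\widetilde m\overline n}(\widetilde{\mathcal A})$ with $\widetilde{\mathcal A}:=\mathcal T_{\widetilde m\overline n}(A)$. Then $\rho_{m\overline n}(\mathcal A)\subset\rho_{\widetilde m\overline n}(\widetilde{\mathcal A})$, and for all $z\in\rho_{m\overline n}(\mathcal A)$ we have $\mathcal G(z)\uparrow_q=\uparrow_q\widetilde{\mathcal G}(z)$ and in particular $\widetilde{\mathcal G}(z)=\downarrow_q\mathcal G(z)\uparrow_q$. \end{enumerate}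
   Context: $j$ is the imaginary unit; $U,X,Y$ are separable complex Hilbert spaces. Upsampler $(\uparrow_q v)_t=v_{t/q}$ if $q\mid t$, else $0$; downsampler $(\downarrow_q v)_t=v_{qt}$; on finite columns $\uparrow_q:V^N\to V^{qN}$ places entries at positions $0,q,2q,\dots$ (zeros elsewhere) and $\downarrow_q:V^{qN}\to V^N$ keeps positions $0,q,2q,\dots$. For $m,n\in\mathbb Z^+$, $c=\gcd(m,n)$, $\overline m=m/c$, $\overline n=n/c$. An $(m,n)$-multirate system consists of $m\overline n$-periodic bounded operator sequences $A_t:X\to X$, $B_t:U\to X$, $C_t:X\to Y$, $D_t:U\to Y$ with equations $x_{t+1}=A_tx_t+B_tu^\circ_t$, $y^\circ_t=C_tx_t+D_tu^\circ_t$, $u^\circ=\uparrow_{\overline m}u$, $y=\downarrow_{\overline n}y^\circ$. For a $T$-periodic sequence $A_t$: $\widehat A_k=\frac1T\sum_{t=0}^{T-1}A_te^{-2\pi jtk/T}$; $\mathcal T_T(A)$ is the $T\times T$ block matrix with entry $\widehat A_{(r-\ell)\bmod T}$ in row $r$, column $\ell$. $\mathcal N_T:=\mathrm{diag}(e^{2\pi jk/T}I)_{k=0}^{T-1}$, $\rho_T(\mathcal A):=\{z: \mathcal N_T-z\mathcal A$ has a bounded inverse$\}$. $\Pi_{T,1,q}:V^T\to V^{qT}$ stacks $q$ copies: $(\Pi_{T,1,q}v)_{t+kT}=v_t$; $\Pi_{T,1,q}^*:V^{qT}\to V^T$, $(\Pi^*_{T,1,q}v)_t=\sum_{k=0}^{q-1}v_{t+kT}$.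 The harmonic transfer function of an $(m,n)$-multirate system is, for $z\in\rho_{m\overline n}(\mathcal T_{m\overline n}(A))$, $\mathcal G(z):=\Pi_{m,1,\overline n}^*\big(z\mathcal C(\mathcal N_{m\overline n}-z\mathcal A)^{-1}\mathcal B+\mathcal D\big)\Pi_{n,1,\overline m}/\overline m:U^n\to Y^m$, where $\mathcal A,\mathcal B,\mathcal C,\mathcal D$ are the Toeplitz transforms with period $m\overline n$ of $A,B,C,D$. For the $(\widetilde m,\widetilde n)$ version, all $m,n$ are replaced by $\widetilde m,\widetilde n$ and the period $m\overline n$ by $\widetilde m\overline n$. *)

theory Defs
  imports "HOL-Analysis.Analysis"
begin

class cvector = real_vector +
  fixes scaleC :: "complex \<Rightarrow> 'a \<Rightarrow> 'a"
  assumes scaleC_add_right: "scaleC a (x + y) = scaleC a x + scaleC a y"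
    and scaleC_add_left: "scaleC (a + b) x = scaleC a x + scaleC b x"
    and scaleC_scaleC: "scaleC a (scaleC b x) = scaleC (a * b) x"
    and scaleC_one: "scaleC 1 x = x"
    and scaleC_of_real: "scaleC (complex_of_real r) x = scaleR r x"

class chilbert = cvector + real_normed_vector + complete_space +
  fixes cinner :: "'a \<Rightarrow> 'a \<Rightarrow> complex"
  assumes cinner_commute: "cinner x y = cnj (cinner y x)"
    and cinner_add_left: "cinner (x + y) z = cinner x z + cinner y z"
    and cinner_scaleC_left: "cinner (scaleC r x) y = cnj r * cinner x y"
    and cinner_ge_zero: "Im (cinner x x) = 0 \<and> Re (cinner x x) \<ge> 0"
    and cinner_eq_zero_iff: "cinner x x = 0 \<longleftrightarrow> x = 0"
    and norm_eq_sqrt_cinner: "norm x = sqrt (Re (cinner x x))"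

text \<open>Separability of the Hilbert spaces is expressed by the class
  second_countable_topology (for metric spaces: separable iff second countable).\<close>

definition bcl :: "('a::chilbert \<Rightarrow> 'b::chilbert) \<Rightarrow> bool" where
  "bcl f \<longleftrightarrow> bounded_linear f \<and> (\<forall>c x. f (scaleC c x) = scaleC c (f x))"

text \<open>A block operator matrix is given by its entries (row, column); only the
  entries with indices below the stated dimensions are relevant.\<close>

type_synonym ('a, 'b) bmat = "nat \<Rightarrow> nat \<Rightarrow> 'a \<Rightarrow> 'b"

definition bmult :: "nat \<Rightarrow> ('b::chilbert, 'c::chilbert) bmat \<Rightarrow> ('a, 'b) bmat \<Rightarrow> ('a, 'c) bmat" where
  "bmult p M N = (\<lambda>r l x. \<Sum>k<p. M r k (N k l x))"

definition badd :: "('a, 'b::chilbert) bmat \<Rightarrow> ('a, 'b) bmat \<Rightarrow> ('a, 'b) bmat" where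
  "badd M N = (\<lambda>r l x. M r l x + N r l x)"

definition bminus :: "('a, 'b::chilbert) bmat \<Rightarrow> ('a, 'b) bmat \<Rightarrow> ('a, 'b) bmat" where
  "bminus M N = (\<lambda>r l x. M r l x - N r l x)"

definition bscale :: "complex \<Rightarrow> ('a, 'b::chilbert) bmat \<Rightarrow> ('a, 'b) bmat" where
  "bscale a M = (\<lambda>r l x. scaleC a (M r l x))"

definition bid :: "('a::chilbert, 'a) bmat" where
  "bid = (\<lambda>r l x. if r = l then x else 0)"

definition beq :: "nat \<Rightarrow> nat \<Rightarrow> ('a, 'b) bmat \<Rightarrow> ('a, 'b) bmat \<Rightarrow> bool" where
  "beq nr nc M N \<longleftrightarrow> (\<forall>r<nr. \<forall>l<nc. M r l = N r l)"

text \<open>R is a bounded inverse of the T x T block operator matrix M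
  (bounded operators on X^T are exactly T x T matrices of bounded operators).\<close>
definition is_binv :: "nat \<Rightarrow> ('a::chilbert, 'a) bmat \<Rightarrow> ('a, 'a) bmat \<Rightarrow> bool" where
  "is_binv T M R \<longleftrightarrow> (\<forall>r<T. \<forall>l<T. bcl (R r l)) \<and>
     beq T T (bmult T M R) bid \<and> beq T T (bmult T R M) bid"

definition binv :: "nat \<Rightarrow> ('a::chilbert, 'a) bmat \<Rightarrow> ('a, 'a) bmat" where
  "binv T M = (SOME R. is_binv T M R)"

definition fhat :: "nat \<Rightarrow> (nat \<Rightarrow> 'a \<Rightarrow> 'b::chilbert) \<Rightarrow> nat \<Rightarrow> 'a \<Rightarrow> 'b" where
  "fhat T A k = (\<lambda>x. scaleC (1 / of_nat T)
     (\<Sum>t<T. scaleC (exp (- 2 * of_real pi * \<i> * of_nat t * of_nat k / of_nat T)) (A t x)))"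

definition toep :: "nat \<Rightarrow> (nat \<Rightarrow> 'a \<Rightarrow> 'b::chilbert) \<Rightarrow> ('a, 'b) bmat" where
  "toep T A = (\<lambda>r l. fhat T A (nat ((int r - int l) mod int T)))"

definition Nmat :: "nat \<Rightarrow> ('a::chilbert, 'a) bmat" where
  "Nmat T = (\<lambda>r l x. if r = l then scaleC (exp (2 * of_real pi * \<i> * of_nat r / of_nat T)) x else 0)"

definition rho :: "nat \<Rightarrow> ('a::chilbert, 'a) bmat \<Rightarrow> complex set" where
  "rho T M = {z. \<exists>R. is_binv T (bminus (Nmat T) (bscale z M)) R}"

text \<open>Pi_{N,1,q} : V^N \<rightarrow> V^(qN) as a (qN) x N block matrix, and its adjoint.\<close>
definition Pi_stack :: "nat \<Rightarrow> ('a::chilbert, 'a) bmat" where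
  "Pi_stack N = (\<lambda>r l x. if r mod N = l then x else 0)"

definition Pi_adj :: "nat \<Rightarrow> ('a::chilbert, 'a) bmat" where
  "Pi_adj N = (\<lambda>l r x. if r mod N = l then x else 0)"

definition up :: "nat \<Rightarrow> ('a::chilbert, 'a) bmat" where
  "up q = (\<lambda>r l x. if r = q * l then x else 0)"

definition down :: "nat \<Rightarrow> ('a::chilbert, 'a) bmat" where
  "down q = (\<lambda>r l x. if l = q * r then x else 0)"

definition multirate ::
  "nat \<Rightarrow> nat \<Rightarrow> (nat \<Rightarrow> 'x::chilbert \<Rightarrow> 'x) \<Rightarrow> (nat \<Rightarrow> 'u::chilbert \<Rightarrow> 'x) \<Rightarrow> (nat \<Rightarrow> 'x \<Rightarrow> 'y::chilbert) \<Rightarrow> (nat \<Rightarrow> 'u \<Rightarrow> 'y)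
   \<Rightarrow> bool" where
  "multirate m n A B C D \<longleftrightarrow> m > 0 \<and> n > 0 \<and>
     (let T = m * (n div gcd m n) in
       (\<forall>t. bcl (A t) \<and> bcl (B t) \<and> bcl (C t) \<and> bcl (D t)) \<and>
       (\<forall>t. A (t + T) = A t \<and> B (t + T) = B t \<and> C (t + T) = C t \<and> D (t + T) = D t))"

definition htf ::
  "nat \<Rightarrow> nat \<Rightarrow> (nat \<Rightarrow> 'x::chilbert \<Rightarrow> 'x) \<Rightarrow> (nat \<Rightarrow> 'u::chilbert \<Rightarrow> 'x) \<Rightarrow> (nat \<Rightarrow> 'x \<Rightarrow> 'y::chilbert) \<Rightarrow> (nat \<Rightarrow> 'u \<Rightarrow> 'y)
   \<Rightarrow> complex \<Rightarrow> ('u, 'y) bmat" where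
  "htf m n A B C D z =
     (let c = gcd m n; mb = m div c; nb = n div c; T = m * nb;
          R = binv T (bminus (Nmat T) (bscale z (toep T A)));
          K = badd (bscale z (bmult T (toep T C) (bmult T R (toep T B)))) (toep T D)
      in bscale (1 / of_nat mb) (bmult T (Pi_adj m) (bmult T K (Pi_stack n))))"

end

theory Submission
  imports Defs
begin


definition clin :: "('a::chilbert \<Rightarrow> 'b::chilbert) \<Rightarrow> bool" where
  "clin f \<longleftrightarrow> (\<forall>x y. f (x + y) = f x + f y) \<and> (\<forall>a x. f (scaleC a x) = scaleC a (f x))"

lemma clin_add: "clin f \<Longrightarrow> f (x + y) = f x + f y" by (simp add: clin_def)
lemma clin_scaleC: "clin f \<Longrightarrow> f (scaleC a x) = scaleC a (f x)" by (simp add: clin_def)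
lemma clin_zero: "clin f \<Longrightarrow> f 0 = 0"
  using clin_add[of f 0 0] by simp
lemma clin_sum: "clin f \<Longrightarrow> f (\<Sum>i\<in>S. g i) = (\<Sum>i\<in>S. f (g i))"
  by (induction S rule: infinite_finite_induct) (auto simp: clin_zero clin_add)
lemma clin_minus: "clin f \<Longrightarrow> f (- x) = - f x"
  using clin_add[of f x "-x"] clin_zero[of f] by (simp add: eq_neg_iff_add_eq_0 add.commute)
lemma clin_diff: "clin f \<Longrightarrow> f (x - y) = f x - f y"
  using clin_add[of f x "-y"] clin_minus[of f y] by simp

lemma scaleC_clin: "clin (scaleC a)"
  by (simp add: clin_def scaleC_add_right scaleC_scaleC mult.commute)
lemma scaleC_zero_right: "scaleC a (0::'a::chilbert) = 0" using clin_zero[OF scaleC_clin] .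
lemma scaleC_sum_right: "scaleC a (\<Sum>i\<in>S. (g i::'a::chilbert)) = (\<Sum>i\<in>S. scaleC a (g i))"
  using clin_sum[OF scaleC_clin] .
lemma scaleC_diff_right: "scaleC a ((x::'a::chilbert) - y) = scaleC a x - scaleC a y"
  using clin_diff[OF scaleC_clin] .
lemma scaleC_zero_left: "scaleC 0 (x::'a::chilbert) = 0"
  using scaleC_of_real[of 0 x] by simp

lemma clin_comp: "clin f \<Longrightarrow> clin g \<Longrightarrow> clin (\<lambda>x. f (g x))"
  by (simp add: clin_def)
lemma clin_scaled: "clin f \<Longrightarrow> clin (\<lambda>x. scaleC a (f x))"
  using clin_comp[OF scaleC_clin] .
lemma clin_plus: "clin f \<Longrightarrow> clin g \<Longrightarrow> clin (\<lambda>x. f x + g x)"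
  by (simp add: clin_def scaleC_add_right algebra_simps)
lemma clin_minus2: "clin f \<Longrightarrow> clin g \<Longrightarrow> clin (\<lambda>x. f x - g x)"
  by (simp add: clin_def scaleC_diff_right algebra_simps)
lemma clin_0: "clin (\<lambda>x. 0)"
  by (simp add: clin_def scaleC_zero_right)
lemma clin_sumf: "(\<And>i. i \<in> S \<Longrightarrow> clin (f i)) \<Longrightarrow> clin (\<lambda>x. \<Sum>i\<in>S. f i x)"
  by (induction S rule: infinite_finite_induct) (auto simp: clin_0 clin_plus)

lemma bcl_clin: "bcl f \<Longrightarrow> clin f"
  unfolding bcl_def clin_def using linear_add bounded_linear.linear by blast

lemma cinner_scale: "cinner (scaleC a x) (scaleC a x) = (cmod a)^2 * cinner x x"
proof -
  have cc: "cnj (cinner x x) = cinner x x" using cinner_commute[of x x] by simp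
  have "cinner x (scaleC a x) = cnj (cnj a * cinner x x)"
    using cinner_commute[of x "scaleC a x"] cinner_scaleC_left[of a x x] by simp
  also have "\<dots> = a * cinner x x" using cc by simp
  finally have 1: "cinner x (scaleC a x) = a * cinner x x" .
  have "cinner (scaleC a x) (scaleC a x) = cnj a * (a * cinner x x)"
    using cinner_scaleC_left[of a x "scaleC a x"] 1 by simp
  also have "\<dots> = (cnj a * a) * cinner x x" by (simp add: mult.assoc)
  also have "cnj a * a = (cmod a)^2" by (metis complex_norm_square mult.commute)
  finally show ?thesis .
qed

lemma norm_scaleC: "norm (scaleC a (x::'a::chilbert)) = cmod a * norm x"
proof -
  have "Re (cinner (scaleC a x) (scaleC a x)) = (cmod a)^2 * Re (cinner x x)"
    by (simp add: cinner_scale)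
  then show ?thesis by (simp add: norm_eq_sqrt_cinner real_sqrt_mult)
qed

lemma bl_scaleC: "bounded_linear (scaleC a :: 'a::chilbert \<Rightarrow> 'a::chilbert)"
proof (rule bounded_linear_intro[where K="cmod a"])
  show "scaleC a (x + y) = scaleC a x + scaleC a y" for x y :: 'a by (rule scaleC_add_right)
  show "scaleC a (r *\<^sub>R x) = r *\<^sub>R scaleC a x" for r and x :: 'a
    by (metis scaleC_of_real scaleC_scaleC mult.commute)
  show "norm (scaleC a x) \<le> norm x * cmod a" for x :: 'a using norm_scaleC[of a x] by (simp add: mult.commute)
qed

lemma bcl_scaled: "bcl f \<Longrightarrow> bcl (\<lambda>x. scaleC a (f x))"
  unfolding bcl_def using bounded_linear_compose[OF bl_scaleC, of f a]
  by (simp add: o_def scaleC_scaleC mult.commute)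

lemma bcl_0: "bcl (\<lambda>x. 0)"
  by (simp add: bcl_def scaleC_zero_right)



lemma bmult_apply: "bmult p M N r l x = (\<Sum>k<p. M r k (N k l x))"
  by (simp add: bmult_def)

lemma sum_delta_lt: "s < (T::nat) \<Longrightarrow> (\<Sum>k<T. if k = s then f k else 0) = f s"
  by (simp add: sum.delta)

lemma sum_delta_lt': "s < (T::nat) \<Longrightarrow> (\<Sum>k<T. if s = k then f k else 0) = f s"
  by (simp add: sum.delta)

lemma is_binv_clin: "is_binv T M R \<Longrightarrow> a < T \<Longrightarrow> b < T \<Longrightarrow> clin (R a b)"
  by (simp add: is_binv_def bcl_clin)

lemma is_binv_MR: "is_binv T M R \<Longrightarrow> a < T \<Longrightarrow> b < T \<Longrightarrow>
    (\<Sum>k<T. M a k (R k b x)) = (if a = b then x else 0)"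
  unfolding is_binv_def beq_def by (metis bmult_apply bid_def)

lemma is_binv_RM: "is_binv T M R \<Longrightarrow> a < T \<Longrightarrow> b < T \<Longrightarrow>
    (\<Sum>k<T. R a k (M k b x)) = (if a = b then x else 0)"
  unfolding is_binv_def beq_def by (metis bmult_apply bid_def)

lemma binv_unique:
  assumes R: "is_binv T M R" and R': "is_binv T M R'" and rs: "r < T" "s < T"
  shows "R r s = R' r s"
proof (rule ext)
  fix x
  have cR: "\<And>a b. a<T \<Longrightarrow> b<T \<Longrightarrow> clin (R a b)" using R is_binv_clin by blast
  have "R r s x = (\<Sum>k<T. if k = s then R r k x else 0)" using rs by (simp add: sum.delta)
  also have "\<dots> = (\<Sum>k<T. R r k (if k = s then x else 0))"
    by (rule sum.cong) (auto simp: clin_zero cR rs)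
  also have "\<dots> = (\<Sum>k<T. R r k (\<Sum>j<T. M k j (R' j s x)))"
    using is_binv_MR[OF R'] rs by simp
  also have "\<dots> = (\<Sum>k<T. \<Sum>j<T. R r k (M k j (R' j s x)))"
    by (rule sum.cong) (auto simp: clin_sum cR rs)
  also have "\<dots> = (\<Sum>j<T. \<Sum>k<T. R r k (M k j (R' j s x)))" by (rule sum.swap)
  also have "\<dots> = (\<Sum>j<T. if r = j then R' j s x else 0)"
    using is_binv_RM[OF R] rs by simp
  also have "\<dots> = R' r s x" using rs by (simp add: sum.delta)
  finally show "R r s x = R' r s x" .
qed

lemma rho_binv: "z \<in> rho T M \<Longrightarrow> is_binv T (bminus (Nmat T) (bscale z M)) (binv T (bminus (Nmat T) (bscale z M)))"
  unfolding rho_def binv_def by (metis (mono_tags) mem_Collect_eq someI)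

lemma is_binvI:
  assumes "\<And>a b. a<T \<Longrightarrow> b<T \<Longrightarrow> bcl (R a b)"
    and "\<And>a b x. a<T \<Longrightarrow> b<T \<Longrightarrow> (\<Sum>k<T. M a k (R k b x)) = (if a = b then x else 0)"
    and "\<And>a b x. a<T \<Longrightarrow> b<T \<Longrightarrow> (\<Sum>k<T. R a k (M k b x)) = (if a = b then x else 0)"
  shows "is_binv T M R"
  using assms unfolding is_binv_def beq_def bid_def by (auto simp: bmult_def)

lemma binv_conj:
  assumes R: "is_binv T M R" and \<sigma>: "bij_betw \<sigma> {..<T} {..<T}" and a: "a \<noteq> 0"
    and M': "\<And>r k y. r<T \<Longrightarrow> k<T \<Longrightarrow> M' r k y = scaleC a (M (\<sigma> r) (\<sigma> k) y)"
    and cM: "\<And>r k. r<T \<Longrightarrow> k<T \<Longrightarrow> clin (M r k)"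
  shows "is_binv T M' (\<lambda>r s x. scaleC (1/a) (R (\<sigma> r) (\<sigma> s) x))"
proof (rule is_binvI)
  have \<sigma>T: "\<And>r. r<T \<Longrightarrow> \<sigma> r < T" using \<sigma> bij_betwE by blast
  have \<sigma>inj: "\<And>r s. r<T \<Longrightarrow> s<T \<Longrightarrow> \<sigma> r = \<sigma> s \<longleftrightarrow> r = s"
    using \<sigma> unfolding bij_betw_def inj_on_def by blast
  have cR: "\<And>a b. a<T \<Longrightarrow> b<T \<Longrightarrow> clin (R a b)" using R is_binv_clin by blast
  show "bcl (\<lambda>x. scaleC (1/a) (R (\<sigma> r) (\<sigma> s) x))" if "r<T" "s<T" for r s
    using R \<sigma>T that unfolding is_binv_def by (auto intro: bcl_scaled)
  show "(\<Sum>k<T. M' r k (scaleC (1/a) (R (\<sigma> k) (\<sigma> s) x))) = (if r = s then x else 0)"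
    if rs: "r<T" "s<T" for r s x
  proof -
    have "(\<Sum>k<T. M' r k (scaleC (1/a) (R (\<sigma> k) (\<sigma> s) x))) = (\<Sum>k<T. M (\<sigma> r) (\<sigma> k) (R (\<sigma> k) (\<sigma> s) x))"
      by (rule sum.cong) (auto simp: M' rs \<sigma>T cM clin_scaleC scaleC_scaleC a scaleC_one)
    also have "\<dots> = (\<Sum>k<T. M (\<sigma> r) k (R k (\<sigma> s) x))"
      using sum.reindex_bij_betw[OF \<sigma>, of "\<lambda>k. M (\<sigma> r) k (R k (\<sigma> s) x)"] .
    also have "\<dots> = (if r = s then x else 0)"
      using is_binv_MR[OF R] rs \<sigma>T \<sigma>inj by simp
    finally show ?thesis .
  qed
  show "(\<Sum>k<T. scaleC (1/a) (R (\<sigma> r) (\<sigma> k) (M' k s x))) = (if r = s then x else 0)"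
    if rs: "r<T" "s<T" for r s x
  proof -
    have "(\<Sum>k<T. scaleC (1/a) (R (\<sigma> r) (\<sigma> k) (M' k s x))) = (\<Sum>k<T. R (\<sigma> r) (\<sigma> k) (M (\<sigma> k) (\<sigma> s) x))"
      by (rule sum.cong) (auto simp: M' rs \<sigma>T cR clin_scaleC scaleC_scaleC a scaleC_one)
    also have "\<dots> = (\<Sum>k<T. R (\<sigma> r) k (M k (\<sigma> s) x))"
      using sum.reindex_bij_betw[OF \<sigma>, of "\<lambda>k. R (\<sigma> r) k (M k (\<sigma> s) x)"] .
    also have "\<dots> = (if r = s then x else 0)"
      using is_binv_RM[OF R] rs \<sigma>T \<sigma>inj by simp
    finally show ?thesis .
  qed
qed



lemma sum_mult_q:
  assumes q: "q > (0::nat)" and f: "\<And>k. k < q*T' \<Longrightarrow> \<not> q dvd k \<Longrightarrow> f k = 0"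
  shows "(\<Sum>k<q*T'. f k) = (\<Sum>i<T'. f (q*i))"
proof -
  have inj: "inj_on (\<lambda>i. q*i) {..<T'}" using q by (auto simp: inj_on_def)
  have "(\<Sum>i<T'. f (q*i)) = sum f ((\<lambda>i. q*i) ` {..<T'})"
    using sum.reindex[OF inj, of f] by (simp add: o_def)
  also have "\<dots> = (\<Sum>k<q*T'. f k)"
  proof (rule sum.mono_neutral_left)
    show "(\<lambda>i. q*i) ` {..<T'} \<subseteq> {..<q*T'}" using q by auto
    show "\<forall>k\<in>{..<q*T'} - (\<lambda>i. q*i) ` {..<T'}. f k = 0"
    proof
      fix k assume k: "k \<in> {..<q*T'} - (\<lambda>i. q*i) ` {..<T'}"
      have "\<not> q dvd k"
      proof
        assume "q dvd k" then obtain i where "k = q*i" by blast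
        with k q show False by auto
      qed
      with k f show "f k = 0" by auto
    qed
  qed auto
  finally show ?thesis by simp
qed

lemma binv_restrict:
  assumes R: "is_binv T M R" and T: "T = q*T'" and q: "q > 0"
    and Mz: "\<And>r s y. r<T \<Longrightarrow> s<T \<Longrightarrow> r mod q \<noteq> s mod q \<Longrightarrow> M r s y = 0"
    and M': "\<And>i j. i<T' \<Longrightarrow> j<T' \<Longrightarrow> M' i j = M (q*i) (q*j)"
    and cM: "\<And>r k. r<T \<Longrightarrow> k<T \<Longrightarrow> clin (M r k)"
  shows "is_binv T' M' (\<lambda>i j. R (q*i) (q*j))"
proof (rule is_binvI)
  have qT: "\<And>i. i<T' \<Longrightarrow> q*i < T" using T q by simp
  have cR: "\<And>a b. a<T \<Longrightarrow> b<T \<Longrightarrow> clin (R a b)" using R is_binv_clin by blast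
  show "bcl (R (q*a) (q*b))" if "a<T'" "b<T'" for a b
    using R qT that unfolding is_binv_def by auto
  show "(\<Sum>k<T'. M' a k (R (q*k) (q*b) x)) = (if a = b then x else 0)"
    if ab: "a<T'" "b<T'" for a b x
  proof -
    have "(\<Sum>k<T'. M' a k (R (q*k) (q*b) x)) = (\<Sum>k<T'. M (q*a) (q*k) (R (q*k) (q*b) x))"
      using ab M' by simp
    also have "\<dots> = (\<Sum>k<q*T'. M (q*a) k (R k (q*b) x))"
      by (rule sym, rule sum_mult_q[OF q]) (use Mz T ab qT in \<open>auto simp: dvd_eq_mod_eq_0\<close>)
    also have "\<dots> = (if q*a = q*b then x else 0)"
      using is_binv_MR[OF R, of "q*a" "q*b" x] T ab qT q by simp
    finally show ?thesis using q by simp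
  qed
  show "(\<Sum>k<T'. R (q*a) (q*k) (M' k b x)) = (if a = b then x else 0)"
    if ab: "a<T'" "b<T'" for a b x
  proof -
    have "(\<Sum>k<T'. R (q*a) (q*k) (M' k b x)) = (\<Sum>k<T'. R (q*a) (q*k) (M (q*k) (q*b) x))"
      using ab M' by simp
    also have "\<dots> = (\<Sum>k<q*T'. R (q*a) k (M k (q*b) x))"
      by (rule sym, rule sum_mult_q[OF q]) (use Mz T ab qT cR clin_zero[OF cR] in \<open>auto simp: dvd_eq_mod_eq_0\<close>)
    also have "\<dots> = (if q*a = q*b then x else 0)"
      using is_binv_RM[OF R, of "q*a" "q*b" x] T ab qT q by simp
    finally show ?thesis using q by simp
  qed
qed

lemma binv_blockdiag:
  assumes R: "is_binv T M R" 
    and Mz: "\<And>r s y. r<T \<Longrightarrow> s<T \<Longrightarrow> r mod q \<noteq> s mod q \<Longrightarrow> M r s y = 0"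
    and cM: "\<And>r k. r<T \<Longrightarrow> k<T \<Longrightarrow> clin (M r k)"
    and rs: "r<T" "s<T" "r mod q \<noteq> s mod (q::nat)"
  shows "R r s x = 0"
proof -
  define R' where "R' = (\<lambda>r s x. if r mod q = s mod q then R r s x else 0)"
  have cR: "\<And>a b. a<T \<Longrightarrow> b<T \<Longrightarrow> clin (R a b)" using R is_binv_clin by blast
  have M0: "\<And>a b. a<T \<Longrightarrow> b<T \<Longrightarrow> M a b 0 = 0" using cM clin_zero by blast
  have R0: "\<And>a b. a<T \<Longrightarrow> b<T \<Longrightarrow> R a b 0 = 0" using cR clin_zero by blast
  have "is_binv T M R'"
  proof (rule is_binvI)
    show "bcl (R' a b)" if "a<T" "b<T" for a b
      using R that unfolding is_binv_def R'_def by (cases "a mod q = b mod q") (auto simp: bcl_0)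
    show "(\<Sum>k<T. M a k (R' k b x)) = (if a = b then x else 0)" if ab: "a<T" "b<T" for a b x
    proof (cases "a mod q = b mod q")
      case True
      have "(\<Sum>k<T. M a k (R' k b x)) = (\<Sum>k<T. M a k (R k b x))"
        by (rule sum.cong) (use True ab Mz M0 in \<open>auto simp: R'_def\<close>)
      then show ?thesis using is_binv_MR[OF R ab] by simp
    next
      case False
      have "(\<Sum>k<T. M a k (R' k b x)) = (\<Sum>k<T. 0)"
        by (rule sum.cong) (use False ab Mz M0 in \<open>auto simp: R'_def\<close>)
      then show ?thesis using False by auto
    qed
    show "(\<Sum>k<T. R' a k (M k b x)) = (if a = b then x else 0)" if ab: "a<T" "b<T" for a b x
    proof (cases "a mod q = b mod q")
      case True
      have "(\<Sum>k<T. R' a k (M k b x)) = (\<Sum>k<T. R a k (M k b x))"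
        by (rule sum.cong) (use True ab Mz R0 in \<open>auto simp: R'_def\<close>)
      then show ?thesis using is_binv_RM[OF R ab] by simp
    next
      case False
      have "(\<Sum>k<T. R' a k (M k b x)) = (\<Sum>k<T. 0)"
        by (rule sum.cong) (use False ab Mz R0 in \<open>auto simp: R'_def\<close>)
      then show ?thesis using False by auto
    qed
  qed
  then have "R r s = R' r s" using binv_unique[OF R _ rs(1,2)] by blast
  then show ?thesis using rs by (simp add: R'_def)
qed



lemma clin_fhat: "(\<And>t. clin (A t)) \<Longrightarrow> clin (fhat T A k)"
  unfolding fhat_def by (intro clin_scaled clin_sumf) auto

lemma clin_toep: "(\<And>t. clin (A t)) \<Longrightarrow> clin (toep T A r s)"
  unfolding toep_def by (rule clin_fhat)

lemma clin_Nmat: "clin (Nmat T r s)"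
  unfolding Nmat_def by (cases "r = s") (auto simp: scaleC_clin clin_0)

lemma clin_M: "(\<And>t. clin (A t)) \<Longrightarrow> clin (bminus (Nmat T) (bscale z (toep T A)) r s)"
  unfolding bminus_def bscale_def
  by (rule clin_minus2[OF clin_Nmat clin_scaled[OF clin_toep]])

definition Kof where
  "Kof T A B C D z R = badd (bscale z (bmult T (toep T C) (bmult T R (toep T B)))) (toep T D)"

lemma Kof_apply: "Kof T A B C D z R a b x =
   scaleC z (\<Sum>k<T. toep T C a k (\<Sum>j<T. R k j (toep T B j b x))) + toep T D a b x"
  by (simp add: Kof_def badd_def bscale_def bmult_def)

lemma Kof_cong: "(\<And>i j. i<T \<Longrightarrow> j<T \<Longrightarrow> R i j = R' i j) \<Longrightarrow> Kof T A B C D z R = Kof T A B C D z R'"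
  unfolding Kof_def bmult_def by (intro ext arg_cong2[where f=badd] refl) (simp add: bscale_def)

lemma clin_Kof:
  assumes "\<And>t. clin (A t)" "\<And>t. clin (B t)" "\<And>t. clin (C t)" "\<And>t. clin (D t)"
    and "\<And>i j. i<T \<Longrightarrow> j<T \<Longrightarrow> clin (R i j)"
  shows "clin (Kof T A B C D z R a b)"
proof -
  have i: "clin (\<lambda>x. \<Sum>j<T. R k j (toep T B j b x))" if "k<T" for k
    by (rule clin_sumf, rule clin_comp) (use assms that in \<open>auto intro: clin_toep\<close>)
  have o: "clin (\<lambda>x. \<Sum>k<T. toep T C a k (\<Sum>j<T. R k j (toep T B j b x)))"
    by (rule clin_sumf, rule clin_comp[OF clin_toep i]) (use assms in auto)
  show ?thesis unfolding Kof_def badd_def bscale_def bmult_def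
    by (rule clin_plus[OF clin_scaled[OF o] clin_toep]) (use assms in auto)
qed

lemma htf_Kof: "htf m n A B C D z = (let c = gcd m n; mb = m div c; nb = n div c; T = m * nb
   in bscale (1 / of_nat mb) (bmult T (Pi_adj m) (bmult T
        (Kof T A B C D z (binv T (bminus (Nmat T) (bscale z (toep T A))))) (Pi_stack n))))"
  by (simp add: htf_def Kof_def Let_def)

lemma htf_expand:
  assumes T: "T = m * (n div gcd m n)"
    and K: "\<And>a b. a<T \<Longrightarrow> b<T \<Longrightarrow> clin (Kof T A B C D z (binv T (bminus (Nmat T) (bscale z (toep T A)))) a b)"
  shows "htf m n A B C D z r k x = scaleC (1 / of_nat (m div gcd m n))
    (\<Sum>a<T. if a mod m = r then (\<Sum>b<T. if b mod n = k then
        Kof T A B C D z (binv T (bminus (Nmat T) (bscale z (toep T A)))) a b x else 0) else 0)"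
proof -
  let ?K = "Kof T A B C D z (binv T (bminus (Nmat T) (bscale z (toep T A))))"
  have "htf m n A B C D z r k x = scaleC (1 / of_nat (m div gcd m n))
      (\<Sum>a<T. Pi_adj m r a (\<Sum>b<T. ?K a b (Pi_stack n b k x)))"
    unfolding htf_Kof Let_def T[symmetric] by (simp add: bscale_def bmult_def)
  also have "\<dots> = scaleC (1 / of_nat (m div gcd m n))
    (\<Sum>a<T. if a mod m = r then (\<Sum>b<T. if b mod n = k then ?K a b x else 0) else 0)"
    unfolding Pi_adj_def Pi_stack_def
    by (intro arg_cong[where f="scaleC _"] sum.cong refl) (auto simp: clin_zero[OF K] intro!: sum.cong)
  finally show ?thesis .
qed



lemma exp_root: "exp (2 * of_real pi * \<i> * of_nat r / of_nat T) = exp (2 * of_real pi * \<i> / of_nat T) ^ r"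
proof -
  have "exp (2 * of_real pi * \<i> * of_nat r / of_nat T) = exp (of_nat r * (2 * of_real pi * \<i> / of_nat T))"
    by (rule arg_cong[where f=exp]) simp
  also have "\<dots> = exp (2 * of_real pi * \<i> / of_nat T) ^ r" by (rule exp_of_nat_mult)
  finally show ?thesis .
qed

lemma root_T: "T > 0 \<Longrightarrow> exp (2 * of_real pi * \<i> / of_nat T) ^ T = 1"
proof -
  assume T: "T > 0"
  have "exp (2 * of_real pi * \<i> / of_nat T) ^ T = exp (of_nat T * (2 * of_real pi * \<i> / of_nat T))"
    by (rule exp_of_nat_mult[symmetric])
  also have "of_nat T * (2 * of_real pi * \<i> / of_nat T) = 2 * of_real pi * \<i>" using T by simp
  finally show ?thesis by simp
qed

lemma root_mod: "e ^ T = (1::complex) \<Longrightarrow> e ^ (r mod T) = e ^ r"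
proof -
  assume e: "e ^ T = 1"
  have "e ^ r = e ^ (T * (r div T) + r mod T)" by simp
  also have "\<dots> = (e ^ T) ^ (r div T) * e ^ (r mod T)" by (simp only: power_add power_mult)
  finally show ?thesis using e by simp
qed

lemma root_nz: "exp (x::complex) \<noteq> 0" by simp

lemma bij_rot: assumes T: "T > (0::nat)" shows "bij_betw (\<lambda>r. (r + l) mod T) {..<T} {..<T}"
proof -
  have inj: "inj_on (\<lambda>r. (r + l) mod T) {..<T}"
  proof (rule inj_onI)
    fix a b assume a: "a \<in> {..<T}" and b: "b \<in> {..<T}" and e: "(a + l) mod T = (b + l) mod T"
    have "int a mod int T = int b mod int T"
    proof -
      have "(int a + int l) mod int T = (int b + int l) mod int T" using e
        by (metis of_nat_add of_nat_mod)
      then show ?thesis by (metis add_diff_cancel_right' mod_diff_left_eq)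
    qed
    then show "a = b" using a b by (simp add: zmod_int[symmetric])
  qed
  have sub: "(\<lambda>r. (r + l) mod T) ` {..<T} \<subseteq> {..<T}" using T by auto
  have "(\<lambda>r. (r + l) mod T) ` {..<T} = {..<T}"
    using endo_inj_surj[OF _ sub inj] by simp
  then show ?thesis using inj by (simp add: bij_betw_def)
qed

lemma toep_shift: "T > 0 \<Longrightarrow> toep T X ((r + l) mod T) ((s + l) mod T) = toep T X r s"
proof -
  assume T: "T > 0"
  have "(int ((r + l) mod T) - int ((s + l) mod T)) mod int T = (int r - int s) mod int T"
  proof -
    have "(int ((r + l) mod T) - int ((s + l) mod T)) mod int T
        = ((int r + int l) mod int T - (int s + int l) mod int T) mod int T"
      by (simp add: zmod_int)
    also have "\<dots> = ((int r + int l) - (int s + int l)) mod int T" by (rule mod_diff_eq)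
    finally show ?thesis by simp
  qed
  then show ?thesis unfolding toep_def by simp
qed



lemma A1: "(n::nat) dvd T \<Longrightarrow> ((b + l) mod T) mod n = (b + l) mod n"
  by (metis mod_mod_cancel)
lemma A2: "(l::nat) < n \<Longrightarrow> ((b + l) mod n = l \<longleftrightarrow> b mod n = 0)"
  by (metis add_diff_cancel_right' dvd_eq_mod_eq_0 le_add2 mod_eq_dvd_iff_nat mod_if)
lemma A3: assumes km: "(k::nat) < m" shows "a mod m = nat((int k - int l) mod int m) \<longleftrightarrow> (a + l) mod m = k"
proof -
  have m: "int m > 0" using km by simp
  have "a mod m = nat((int k - int l) mod int m) \<longleftrightarrow> int a mod int m = (int k - int l) mod int m"
    using m by (metis nat_int of_nat_mod pos_mod_sign int_nat_eq)
  also have "\<dots> \<longleftrightarrow> int m dvd (int a - (int k - int l))" by (rule mod_eq_dvd_iff)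
  also have "\<dots> \<longleftrightarrow> int m dvd ((int a + int l) - int k)" by (simp add: algebra_simps)
  also have "\<dots> \<longleftrightarrow> (int a + int l) mod int m = int k mod int m" by (rule mod_eq_dvd_iff[symmetric])
  also have "\<dots> \<longleftrightarrow> (a + l) mod m = k" using km
    by (metis of_nat_add of_nat_eq_iff of_nat_mod mod_less)
  finally show ?thesis .
qed

abbreviation MM where "MM T A z \<equiv> bminus (Nmat T) (bscale z (toep T A))"

lemma M_apply: "MM T A z r k y = Nmat T r k y - scaleC z (toep T A r k y)"
  by (simp add: bminus_def bscale_def)

lemma part1_M:
  assumes T: "T > 0" and rk: "r < T" "k < T"
  defines "\<epsilon> \<equiv> exp (2 * of_real pi * \<i> / of_nat T)"
  shows "MM T A (z / \<epsilon>^l) r k y = scaleC (1/\<epsilon>^l) (MM T A z ((r + l) mod T) ((k + l) mod T) y)"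
proof -
  have e0: "\<epsilon> \<noteq> 0" unfolding \<epsilon>_def by simp
  have eT: "\<epsilon> ^ T = 1" unfolding \<epsilon>_def using root_T[OF T] .
  have inj: "(r + l) mod T = (k + l) mod T \<longleftrightarrow> r = k"
    using bij_rot[OF T, of l] rk unfolding bij_betw_def inj_on_def by blast
  have N: "Nmat T r k y = scaleC (1/\<epsilon>^l) (Nmat T ((r + l) mod T) ((k + l) mod T) y)"
  proof (cases "r = k")
    case True
    have "(1/\<epsilon>^l) * \<epsilon> ^ ((r + l) mod T) = \<epsilon> ^ r"
      using root_mod[OF eT, of "r + l"] e0 by (simp add: power_add field_simps)
    then show ?thesis using True unfolding Nmat_def
      by (simp add: scaleC_scaleC exp_root \<epsilon>_def[symmetric])
  next
    case False
    then show ?thesis using inj unfolding Nmat_def by (simp add: scaleC_zero_right)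
  qed
  show ?thesis unfolding M_apply
    using N toep_shift[OF T, of A r l k] e0
    by (simp add: scaleC_diff_right scaleC_scaleC)
qed

lemma part1_K:
  assumes T: "T > 0"
    and cA: "\<And>t. clin (A t)" and cB: "\<And>t. clin (B t)" and cC: "\<And>t. clin (C t)" and cD: "\<And>t. clin (D t)"
    and z: "z \<in> rho T (toep T A)"
  defines "\<epsilon> \<equiv> exp (2 * of_real pi * \<i> / of_nat T)"
  shows "z / \<epsilon>^l \<in> rho T (toep T A)"
    and "\<And>a b. a<T \<Longrightarrow> b<T \<Longrightarrow> Kof T A B C D (z/\<epsilon>^l) (binv T (MM T A (z/\<epsilon>^l))) a b
        = Kof T A B C D z (binv T (MM T A z)) ((a + l) mod T) ((b + l) mod T)"
proof -
  define \<sigma> where "\<sigma> = (\<lambda>r. (r + l) mod T)"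
  have \<sigma>: "bij_betw \<sigma> {..<T} {..<T}" unfolding \<sigma>_def by (rule bij_rot[OF T])
  have \<sigma>T: "\<And>r. r<T \<Longrightarrow> \<sigma> r < T" using \<sigma> bij_betwE by blast
  have e0: "\<epsilon> \<noteq> 0" unfolding \<epsilon>_def by simp
  define R where "R = binv T (MM T A z)"
  have R: "is_binv T (MM T A z) R" unfolding R_def by (rule rho_binv[OF z])
  define R' where "R' = (\<lambda>r s x. scaleC (1/(1/\<epsilon>^l)) (R (\<sigma> r) (\<sigma> s) x))"
  have R': "is_binv T (MM T A (z/\<epsilon>^l)) R'"
    unfolding R'_def
  proof (rule binv_conj[OF R \<sigma>])
    show "1/\<epsilon>^l \<noteq> 0" using e0 by simp
    show "MM T A (z / \<epsilon> ^ l) r k y = scaleC (1 / \<epsilon> ^ l) (MM T A z (\<sigma> r) (\<sigma> k) y)"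
      if "r<T" "k<T" for r k y
      using part1_M[OF T that, where A=A and z=z and l=l and y=y] unfolding \<sigma>_def \<epsilon>_def by simp
    show "clin (MM T A z r k)" for r k by (rule clin_M[OF cA])
  qed
  then show "z / \<epsilon>^l \<in> rho T (toep T A)" unfolding rho_def by blast
  then have R'': "is_binv T (MM T A (z/\<epsilon>^l)) (binv T (MM T A (z/\<epsilon>^l)))" by (rule rho_binv)
  have KK: "Kof T A B C D (z/\<epsilon>^l) (binv T (MM T A (z/\<epsilon>^l))) = Kof T A B C D (z/\<epsilon>^l) R'"
    by (rule Kof_cong, rule binv_unique[OF R'' R'])
  have cR: "\<And>a b. a<T \<Longrightarrow> b<T \<Longrightarrow> clin (R a b)" using R is_binv_clin by blast
  fix a b assume ab: "a<T" "b<T"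
  show "Kof T A B C D (z/\<epsilon>^l) (binv T (MM T A (z/\<epsilon>^l))) a b
        = Kof T A B C D z (binv T (MM T A z)) ((a + l) mod T) ((b + l) mod T)"
  proof (rule ext)
    fix x
    have ts: "\<And>X r s. toep T X r s = toep T X (\<sigma> r) (\<sigma> s)"
      unfolding \<sigma>_def by (rule toep_shift[OF T, symmetric])
    have "Kof T A B C D (z/\<epsilon>^l) R' a b x =
      scaleC (z/\<epsilon>^l) (\<Sum>k<T. toep T C (\<sigma> a) (\<sigma> k) (scaleC (1/(1/\<epsilon>^l))
          (\<Sum>j<T. R (\<sigma> k) (\<sigma> j) (toep T B (\<sigma> j) (\<sigma> b) x)))) + toep T D (\<sigma> a) (\<sigma> b) x"
      unfolding Kof_apply R'_def by (subst (1 2 3) ts) (simp add: scaleC_sum_right)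
    also have "\<dots> = scaleC (z/\<epsilon>^l * (1/(1/\<epsilon>^l))) (\<Sum>k<T. toep T C (\<sigma> a) (\<sigma> k)
          (\<Sum>j<T. R (\<sigma> k) (\<sigma> j) (toep T B (\<sigma> j) (\<sigma> b) x))) + toep T D (\<sigma> a) (\<sigma> b) x"
      by (simp add: clin_scaleC[OF clin_toep[OF cC]] scaleC_sum_right[symmetric] scaleC_scaleC)
    also have "z/\<epsilon>^l * (1/(1/\<epsilon>^l)) = z" using e0 by simp
    also have "(\<Sum>k<T. toep T C (\<sigma> a) (\<sigma> k) (\<Sum>j<T. R (\<sigma> k) (\<sigma> j) (toep T B (\<sigma> j) (\<sigma> b) x)))
        = (\<Sum>k<T. toep T C (\<sigma> a) (\<sigma> k) (\<Sum>j<T. R (\<sigma> k) j (toep T B j (\<sigma> b) x)))"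
      by (rule sum.cong[OF refl], rule arg_cong[where f="toep T C _ _"],
          rule sum.reindex_bij_betw[OF \<sigma>])
    also have "\<dots> = (\<Sum>k<T. toep T C (\<sigma> a) k (\<Sum>j<T. R k j (toep T B j (\<sigma> b) x)))"
      by (rule sum.reindex_bij_betw[OF \<sigma>])
    finally have "Kof T A B C D (z/\<epsilon>^l) R' a b x = Kof T A B C D z R (\<sigma> a) (\<sigma> b) x"
      unfolding Kof_apply .
    then show "Kof T A B C D (z/\<epsilon>^l) (binv T (MM T A (z/\<epsilon>^l))) a b x
        = Kof T A B C D z (binv T (MM T A z)) ((a + l) mod T) ((b + l) mod T) x"
      unfolding KK R_def \<sigma>_def .
  qed
qed



lemma n_dvd_T: "(n::nat) dvd m * (n div gcd m n)"
  by (metis div_mult_swap dvd_div_mult dvd_mult_right gcd_dvd1 gcd_dvd2 gcd_nat.order_iff_strict)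
lemma nb_pos: "(n::nat) > 0 \<Longrightarrow> n div gcd m n > 0"
  by (simp add: div_greater_zero_iff)

lemma part1_htf:
  assumes m: "m > 0" and n: "n > 0"
    and cA: "\<And>t. clin (A t)" and cB: "\<And>t. clin (B t)" and cC: "\<And>t. clin (C t)" and cD: "\<And>t. clin (D t)"
    and TT: "T = m * (n div gcd m n)"
    and z: "z \<in> rho T (toep T A)" and k: "k < m" and l: "l < n"
  defines "\<epsilon> \<equiv> exp (2 * of_real pi * \<i> / of_nat T)"
  shows "z / \<epsilon>^l \<in> rho T (toep T A) \<and>
    htf m n A B C D z k l = htf m n A B C D (z / \<epsilon>^l) (nat ((int k - int l) mod int m)) 0"
proof
  have T: "T > 0" using TT m nb_pos[OF n] by simp
  have mT: "m dvd T" and nT: "n dvd T" using TT n_dvd_T by auto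
  show z': "z / \<epsilon>^l \<in> rho T (toep T A)" unfolding \<epsilon>_def by (rule part1_K(1)[OF T cA cB cC cD z])
  define \<sigma> where "\<sigma> = (\<lambda>r. (r + l) mod T)"
  have \<sigma>: "bij_betw \<sigma> {..<T} {..<T}" unfolding \<sigma>_def by (rule bij_rot[OF T])
  define K where "K = Kof T A B C D z (binv T (MM T A z))"
  define K' where "K' = Kof T A B C D (z/\<epsilon>^l) (binv T (MM T A (z/\<epsilon>^l)))"
  have KK: "\<And>a b. a<T \<Longrightarrow> b<T \<Longrightarrow> K' a b = K (\<sigma> a) (\<sigma> b)"
    unfolding K_def K'_def \<sigma>_def \<epsilon>_def by (rule part1_K(2)[OF T cA cB cC cD z])
  have cK: "\<And>a b. clin (K a b)" unfolding K_def
    by (rule clin_Kof[OF cA cB cC cD]) (use rho_binv[OF z] is_binv_clin in blast)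
  have cK': "\<And>a b. clin (K' a b)" unfolding K'_def
    by (rule clin_Kof[OF cA cB cC cD]) (use rho_binv[OF z'] is_binv_clin in blast)
  let ?k' = "nat ((int k - int l) mod int m)"
  show "htf m n A B C D z k l = htf m n A B C D (z / \<epsilon>^l) ?k' 0"
  proof (rule ext)
    fix x
    have "htf m n A B C D (z / \<epsilon>^l) ?k' 0 x = scaleC (1 / of_nat (m div gcd m n))
      (\<Sum>a<T. if a mod m = ?k' then (\<Sum>b<T. if b mod n = 0 then K' a b x else 0) else 0)"
      unfolding K'_def by (rule htf_expand[OF TT]) (use cK' K'_def in simp)
    also have "(\<Sum>a<T. if a mod m = ?k' then (\<Sum>b<T. if b mod n = 0 then K' a b x else 0) else 0)
      = (\<Sum>a<T. if \<sigma> a mod m = k then (\<Sum>b<T. if \<sigma> b mod n = l then K (\<sigma> a) (\<sigma> b) x else 0) else 0)"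
    proof (rule sum.cong[OF refl])
      fix a assume a: "a \<in> {..<T}"
      have c1: "(a mod m = ?k') = (\<sigma> a mod m = k)"
        unfolding \<sigma>_def A1[OF mT] A3[OF k] ..
      have c2: "\<And>b. (b mod n = 0) = (\<sigma> b mod n = l)"
        unfolding \<sigma>_def A1[OF nT] A2[OF l] ..
      show "(if a mod m = ?k' then (\<Sum>b<T. if b mod n = 0 then K' a b x else 0) else 0)
        = (if \<sigma> a mod m = k then (\<Sum>b<T. if \<sigma> b mod n = l then K (\<sigma> a) (\<sigma> b) x else 0) else 0)"
        unfolding c1 c2 using a KK by (auto intro!: sum.cong)
    qed
    also have "\<dots> = (\<Sum>a<T. if \<sigma> a mod m = k then (\<Sum>b<T. if b mod n = l then K (\<sigma> a) b x else 0) else 0)"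
      by (rule sum.cong[OF refl], rule arg_cong[where f="\<lambda>s. if _ then s else 0"],
          rule sum.reindex_bij_betw[OF \<sigma>, where g="\<lambda>b. if b mod n = l then K _ b x else 0"])
    also have "\<dots> = (\<Sum>a<T. if a mod m = k then (\<Sum>b<T. if b mod n = l then K a b x else 0) else 0)"
      by (rule sum.reindex_bij_betw[OF \<sigma>, where g="\<lambda>a. if a mod m = k then (\<Sum>b<T. if b mod n = l then K a b x else 0) else 0"])
    also have "scaleC (1 / of_nat (m div gcd m n)) \<dots> = htf m n A B C D z k l x"
      unfolding K_def by (rule htf_expand[OF TT, symmetric]) (use cK K_def in simp)
    finally show "htf m n A B C D z k l x = htf m n A B C D (z / \<epsilon>^l) ?k' 0 x" by simp
  qed
qed



lemma scaleC_sum_left: "scaleC (\<Sum>i\<in>S. c i) (x::'a::chilbert) = (\<Sum>i\<in>S. scaleC (c i) x)"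
  by (induction S rule: infinite_finite_induct) (auto simp: scaleC_zero_left scaleC_add_left)

lemma sum_split_q: fixes q T' :: nat shows "(\<Sum>t<q*T'. g t) = (\<Sum>j<q. \<Sum>t<T'. g (t + j*T'))"
proof -
  have "(\<Sum>t<q*T'. g t) = (\<Sum>j<q. sum g {j*T'..<j*T'+T'})" using sum.nat_group[of g T' q] by simp
  also have "\<dots> = (\<Sum>j<q. \<Sum>t<T'. g (t + j*T'))"
  proof (rule sum.cong[OF refl])
    fix j
    show "sum g {j*T'..<j*T'+T'} = (\<Sum>t<T'. g (t + j*T'))"
      using sum.shift_bounds_nat_ivl[of g 0 "j*T'" T'] by (simp add: atLeast0LessThan add.commute)
  qed
  finally show ?thesis .
qed

lemma periodic_mult: "(\<And>t. A (t + T') = A t) \<Longrightarrow> A (t + (j::nat)*T') = A t"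
proof (induction j)
  case (Suc j)
  have "A (t + Suc j * T') = A ((t + j*T') + T')" by (simp add: algebra_simps)
  also have "\<dots> = A (t + j*T')" by (rule Suc.prems)
  finally show ?case using Suc by simp
qed simp

lemma sum_roots:
  assumes q: "q > (0::nat)"
  shows "(\<Sum>j<q. exp (- 2 * of_real pi * \<i> * of_nat k / of_nat q) ^ j) = (if q dvd k then of_nat q else 0)"
proof (cases "q dvd k")
  case True
  then obtain k' where k: "k = q * k'" by blast
  have "exp (- 2 * of_real pi * \<i> * of_nat k / of_nat q) = exp (of_nat k' * (- 2 * of_real pi * \<i>))"
    using q by (intro arg_cong[where f=exp]) (simp add: k field_simps)
  also have "\<dots> = exp (- 2 * of_real pi * \<i>) ^ k'" by (rule exp_of_nat_mult)
  also have "exp (- 2 * of_real pi * \<i>) = (1::complex)"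
    by (metis exp_minus_inverse exp_two_pi_i mult_minus_left mult_cancel_right1)
  finally show ?thesis using True by simp
next
  case False
  let ?w = "exp (- 2 * of_real pi * \<i> * of_nat k / of_nat q)"
  have w1: "?w \<noteq> 1"
  proof
    assume "?w = 1"
    then obtain n::int where "Im (- 2 * of_real pi * \<i> * of_nat k / of_nat q) = of_int (2 * n) * pi"
      unfolding exp_eq_1 by blast
    then have "- 2 * pi * real k / real q = 2 * real_of_int n * pi" by simp
    then have "pi * (real k + real_of_int n * real q) = 0" using q by (simp add: field_simps)
    then have "real k + real_of_int n * real q = 0" by simp
    then have "real k = - real_of_int n * real q" by simp
    then have "int k = - n * int q" by (metis of_int_eq_iff of_int_minus of_int_mult of_int_of_nat_eq)
    then have "int q dvd int k" by simp
    then show False using False by simp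
  qed
  have wq: "?w ^ q = 1"
  proof -
    have "?w ^ q = exp (of_nat q * (- 2 * of_real pi * \<i> * of_nat k / of_nat q))"
      by (rule exp_of_nat_mult[symmetric])
    also have "\<dots> = exp (of_nat k * (- 2 * of_real pi * \<i>))"
      using q by (intro arg_cong[where f=exp]) (simp add: field_simps)
    also have "\<dots> = exp (- 2 * of_real pi * \<i>) ^ k" by (rule exp_of_nat_mult)
    also have "exp (- 2 * of_real pi * \<i>) = (1::complex)"
      by (metis exp_minus_inverse exp_two_pi_i mult_minus_left mult_cancel_right1)
    finally show ?thesis by simp
  qed
  show ?thesis using geometric_sum[OF w1, of q] wq False by simp
qed



lemma exp_split:
  assumes q: "q > (0::nat)" and T': "T' > (0::nat)"
  shows "exp (- 2 * of_real pi * \<i> * of_nat (t + j*T') * of_nat k / of_nat (q*T'))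
    = exp (- 2 * of_real pi * \<i> * of_nat t * of_nat k / of_nat (q*T')) * exp (- 2 * of_real pi * \<i> * of_nat k / of_nat q) ^ j"
proof -
  have "exp (- 2 * of_real pi * \<i> * of_nat (t + j*T') * of_nat k / of_nat (q*T'))
     = exp (- 2 * of_real pi * \<i> * of_nat t * of_nat k / of_nat (q*T') + of_nat j * (- 2 * of_real pi * \<i> * of_nat k / of_nat q))"
    using q T' by (intro arg_cong[where f=exp]) (simp add: field_simps)
  also have "\<dots> = exp (- 2 * of_real pi * \<i> * of_nat t * of_nat k / of_nat (q*T')) * exp (- 2 * of_real pi * \<i> * of_nat k / of_nat q) ^ j"
    by (simp only: exp_add exp_of_nat_mult)
  finally show ?thesis .
qed

lemma fhat_per:
  assumes q: "q > (0::nat)" and T': "T' > 0" and per: "\<And>t. A (t + T') = A t"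
  shows "fhat (q*T') A k x = (if q dvd k then fhat T' A (k div q) x else 0)"
proof -
  let ?e = "\<lambda>t. exp (- 2 * of_real pi * \<i> * of_nat t * of_nat k / of_nat (q*T'))"
  let ?w = "exp (- 2 * of_real pi * \<i> * of_nat k / of_nat q)"
  have "(\<Sum>t<q*T'. scaleC (?e t) (A t x)) = (\<Sum>j<q. \<Sum>t<T'. scaleC (?e (t + j*T')) (A (t + j*T') x))"
    by (rule sum_split_q)
  also have "\<dots> = (\<Sum>j<q. \<Sum>t<T'. scaleC (?e t * ?w ^ j) (A t x))"
    using exp_split[OF q T'] periodic_mult[of A T', OF per] by simp
  also have "\<dots> = (\<Sum>t<T'. \<Sum>j<q. scaleC (?e t * ?w ^ j) (A t x))" by (rule sum.swap)
  also have "\<dots> = (\<Sum>t<T'. scaleC (?e t * (\<Sum>j<q. ?w ^ j)) (A t x))"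
    by (simp add: sum_distrib_left scaleC_sum_left)
  also have "\<dots> = (\<Sum>t<T'. scaleC (?e t * (if q dvd k then of_nat q else 0)) (A t x))"
    by (simp only: sum_roots[OF q])
  finally have S: "(\<Sum>t<q*T'. scaleC (?e t) (A t x)) = (\<Sum>t<T'. scaleC (?e t * (if q dvd k then of_nat q else 0)) (A t x))" .
  show ?thesis
  proof (cases "q dvd k")
    case True
    then obtain k' where k: "k = q * k'" by blast
    have e: "?e t = exp (- 2 * of_real pi * \<i> * of_nat t * of_nat k' / of_nat T')" for t
      using q T' by (intro arg_cong[where f=exp]) (simp add: k field_simps)
    have "fhat (q*T') A k x = scaleC (1 / of_nat (q*T')) (\<Sum>t<T'. scaleC (?e t * of_nat q) (A t x))"
      unfolding fhat_def using S True by simp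
    also have "\<dots> = (\<Sum>t<T'. scaleC (1 / of_nat (q*T') * (?e t * of_nat q)) (A t x))"
      by (simp add: scaleC_sum_right scaleC_scaleC)
    also have "\<dots> = (\<Sum>t<T'. scaleC (1 / of_nat T' * exp (- 2 * of_real pi * \<i> * of_nat t * of_nat k' / of_nat T')) (A t x))"
      using q by (intro sum.cong refl arg_cong2[where f=scaleC]) (simp_all add: k field_simps)
    also have "\<dots> = fhat T' A (k div q) x"
      unfolding fhat_def using k q by (simp add: scaleC_sum_right scaleC_scaleC)
    finally show ?thesis using True by simp
  next
    case False
    then show ?thesis unfolding fhat_def using S by (simp add: scaleC_zero_left scaleC_zero_right)
  qed
qed



lemma qdvd: assumes q: "q > 0" and T': "T' > 0"
  shows "(q dvd nat ((int r - int s) mod int (q*T'))) = (r mod q = s mod q)"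
proof -
  have nn: "(int r - int s) mod int (q*T') \<ge> 0" using q T' by simp
  have "(q dvd nat ((int r - int s) mod int (q*T'))) = (int q dvd (int r - int s) mod int (q*T'))"
    using nn by (metis int_nat_eq of_nat_dvd_iff)
  also have "\<dots> = (int q dvd (int r - int s))" by (rule dvd_mod_iff) simp
  also have "\<dots> = (int r mod int q = int s mod int q)" by (rule mod_eq_dvd_iff[symmetric])
  also have "\<dots> = (r mod q = s mod q)" by (metis of_nat_eq_iff of_nat_mod)
  finally show ?thesis .
qed

lemma toep_off:
  assumes q: "q > (0::nat)" and T': "T' > 0" and per: "\<And>t. A (t + T') = A t"
    and rs: "r mod q \<noteq> s mod q"
  shows "toep (q*T') A r s x = 0"
  unfolding toep_def using fhat_per[where A=A, OF q T' per] qdvd[OF q T'] rs by simp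

lemma toep_on:
  assumes q: "q > (0::nat)" and T': "T' > 0" and per: "\<And>t. A (t + T') = A t"
  shows "toep (q*T') A (q*i) (q*j) = toep T' A i j"
proof (rule ext)
  fix x
  have e: "(int (q*i) - int (q*j)) mod int (q*T') = int q * ((int i - int j) mod int T')"
    by (simp add: mult_mod_right right_diff_distrib)
  have nn: "(int i - int j) mod int T' \<ge> 0" using T' by simp
  have e2: "nat ((int (q*i) - int (q*j)) mod int (q*T')) = q * nat ((int i - int j) mod int T')"
    unfolding e using nn by (simp add: nat_mult_distrib)
  show "toep (q*T') A (q*i) (q*j) x = toep T' A i j x"
    unfolding toep_def e2 using fhat_per[where A=A, OF q T' per] q by simp
qed

lemma Nmat_on: assumes q: "q > (0::nat)"
  shows "Nmat (q*T') (q*i) (q*j) = Nmat T' i j"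
proof -
  have "exp (2 * complex_of_real pi * \<i> * of_nat (q*i) / of_nat (q*T')) = exp (2 * complex_of_real pi * \<i> * of_nat i / of_nat T')"
    using q by (intro arg_cong[where f=exp]) (simp add: field_simps)
  moreover have "(q*i = q*j) = (i = j)" using q by simp
  ultimately show ?thesis unfolding Nmat_def by (simp only:)
qed

lemma MM_off:
  assumes q: "q > (0::nat)" and T': "T' > 0" and per: "\<And>t. A (t + T') = A t"
    and rs: "r mod q \<noteq> s mod q"
  shows "MM (q*T') A z r s y = 0"
proof -
  have "r \<noteq> s" using rs by auto
  then show ?thesis unfolding M_apply using toep_off[where A=A, OF q T' per rs]
    by (simp add: Nmat_def scaleC_zero_right)
qed

lemma MM_on:
  assumes q: "q > (0::nat)" and T': "T' > 0" and per: "\<And>t. A (t + T') = A t"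
  shows "MM (q*T') A z (q*i) (q*j) = MM T' A z i j"
  by (rule ext) (simp add: M_apply toep_on[where A=A, OF q T' per] Nmat_on[OF q])



lemma part2_K:
  assumes q: "q > (0::nat)" and T': "T' > 0"
    and pA: "\<And>t. A (t + T') = A t" and pB: "\<And>t. B (t + T') = B t"
    and pC: "\<And>t. C (t + T') = C t" and pD: "\<And>t. D (t + T') = D t"
    and cA: "\<And>t. clin (A t)" and cB: "\<And>t. clin (B t)" and cC: "\<And>t. clin (C t)" and cD: "\<And>t. clin (D t)"
    and z: "z \<in> rho (q*T') (toep (q*T') A)"
  shows "z \<in> rho T' (toep T' A)"
    and "\<And>a b x. a < q*T' \<Longrightarrow> b < q*T' \<Longrightarrow> a mod q \<noteq> b mod q \<Longrightarrow>
           Kof (q*T') A B C D z (binv (q*T') (MM (q*T') A z)) a b x = 0"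
    and "\<And>i j. i < T' \<Longrightarrow> j < T' \<Longrightarrow>
           Kof (q*T') A B C D z (binv (q*T') (MM (q*T') A z)) (q*i) (q*j)
           = Kof T' A B C D z (binv T' (MM T' A z)) i j"
proof -
  define T where "T = q*T'"
  define R where "R = binv T (MM T A z)"
  have R: "is_binv T (MM T A z) R" unfolding R_def T_def by (rule rho_binv[OF z])
  have cR: "\<And>a b. a<T \<Longrightarrow> b<T \<Longrightarrow> clin (R a b)" using R is_binv_clin by blast
  have R0: "\<And>a b. a<T \<Longrightarrow> b<T \<Longrightarrow> R a b 0 = 0" using cR clin_zero by blast
  have Moff: "\<And>r s y. r<T \<Longrightarrow> s<T \<Longrightarrow> r mod q \<noteq> s mod q \<Longrightarrow> MM T A z r s y = 0"
    unfolding T_def using MM_off[where A=A, OF q T' pA] by blast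
  have R': "is_binv T' (MM T' A z) (\<lambda>i j. R (q*i) (q*j))"
  proof (rule binv_restrict[OF R T_def q Moff])
    show "MM T' A z i j = MM T A z (q*i) (q*j)" for i j
      unfolding T_def by (rule MM_on[where A=A, OF q T' pA, symmetric])
    show "clin (MM T A z r k)" for r k by (rule clin_M[OF cA])
  qed auto
  then show z': "z \<in> rho T' (toep T' A)" unfolding rho_def by blast
  have Roff: "\<And>a b x. a<T \<Longrightarrow> b<T \<Longrightarrow> a mod q \<noteq> b mod q \<Longrightarrow> R a b x = 0"
    by (rule binv_blockdiag[OF R Moff]) (auto intro: clin_M[OF cA])
  have Boff: "\<And>r s x. r mod q \<noteq> s mod q \<Longrightarrow> toep T B r s x = 0"
    unfolding T_def using toep_off[where A=B, OF q T' pB] by blast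
  have Coff: "\<And>r s x. r mod q \<noteq> s mod q \<Longrightarrow> toep T C r s x = 0"
    unfolding T_def using toep_off[where A=C, OF q T' pC] by blast
  have Doff: "\<And>r s x. r mod q \<noteq> s mod q \<Longrightarrow> toep T D r s x = 0"
    unfolding T_def using toep_off[where A=D, OF q T' pD] by blast
  have C0: "\<And>r s. toep T C r s 0 = 0" using clin_zero[OF clin_toep[where A=C, OF cC]] by blast
  show "Kof (q*T') A B C D z (binv (q*T') (MM (q*T') A z)) a b x = 0"
    if ab: "a < q*T'" "b < q*T'" "a mod q \<noteq> b mod q" for a b x
  proof -
    have "(\<Sum>k<T. toep T C a k (\<Sum>j<T. R k j (toep T B j b x))) = (\<Sum>k<T. 0)"
    proof (rule sum.cong[OF refl])
      fix k assume k: "k \<in> {..<T}"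
      show "toep T C a k (\<Sum>j<T. R k j (toep T B j b x)) = 0"
      proof (cases "k mod q = a mod q")
        case True
        have "(\<Sum>j<T. R k j (toep T B j b x)) = (\<Sum>j<T. 0)"
        proof (rule sum.cong[OF refl])
          fix j assume j: "j \<in> {..<T}"
          show "R k j (toep T B j b x) = 0"
          proof (cases "j mod q = b mod q")
            case True
            then show ?thesis using Roff[of k j] k j ab \<open>k mod q = a mod q\<close> by auto
          next
            case False
            then show ?thesis using Boff R0 k j by auto
          qed
        qed
        then show ?thesis using C0 by simp
      next
        case False
        then show ?thesis using Coff by metis
      qed
    qed
    then show ?thesis unfolding Kof_apply T_def[symmetric] R_def[symmetric]
      using Doff ab by (simp add: scaleC_zero_right)
  qed
  show "Kof (q*T') A B C D z (binv (q*T') (MM (q*T') A z)) (q*i) (q*j)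
           = Kof T' A B C D z (binv T' (MM T' A z)) i j"
    if ij: "i < T'" "j < T'" for i j
  proof (rule ext)
    fix x
    have KK: "Kof T' A B C D z (binv T' (MM T' A z)) = Kof T' A B C D z (\<lambda>i j. R (q*i) (q*j))"
      by (rule Kof_cong, rule binv_unique[OF rho_binv[OF z'] R'])
    have inner: "(\<Sum>j'<T. R k j' (toep T B j' (q*j) x)) = (\<Sum>j''<T'. R k (q*j'') (toep T' B j'' j x))"
      if k: "k < T" for k
    proof -
      have "(\<Sum>j'<q*T'. R k j' (toep T B j' (q*j) x)) = (\<Sum>j''<T'. R k (q*j'') (toep T B (q*j'') (q*j) x))"
        by (rule sum_mult_q[OF q]) (use Boff R0 k T_def in \<open>auto simp: dvd_eq_mod_eq_0\<close>)
      then show ?thesis unfolding T_def toep_on[where A=B, OF q T' pB] .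
    qed
    have outer: "(\<Sum>k<T. toep T C (q*i) k (\<Sum>j'<T. R k j' (toep T B j' (q*j) x)))
      = (\<Sum>k'<T'. toep T' C i k' (\<Sum>j''<T'. R (q*k') (q*j'') (toep T' B j'' j x)))"
    proof -
      have "(\<Sum>k<T. toep T C (q*i) k (\<Sum>j'<T. R k j' (toep T B j' (q*j) x)))
          = (\<Sum>k<T. toep T C (q*i) k (\<Sum>j''<T'. R k (q*j'') (toep T' B j'' j x)))"
        using inner by simp
      also have "\<dots> = (\<Sum>k'<T'. toep T C (q*i) (q*k') (\<Sum>j''<T'. R (q*k') (q*j'') (toep T' B j'' j x)))"
        unfolding T_def by (rule sum_mult_q[OF q]) (use Coff T_def in \<open>auto simp: dvd_eq_mod_eq_0\<close>)
      finally show ?thesis unfolding T_def toep_on[where A=C, OF q T' pC] .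
    qed
    show "Kof (q*T') A B C D z (binv (q*T') (MM (q*T') A z)) (q*i) (q*j) x
           = Kof T' A B C D z (binv T' (MM T' A z)) i j x"
      unfolding KK Kof_apply T_def[symmetric] R_def[symmetric] outer
      unfolding T_def toep_on[where A=D, OF q T' pD] ..
  qed
qed



lemma part2_htf:
  assumes q: "q > (0::nat)" and T': "T' > 0" and mt: "mt > 0" and nt: "nt > 0"
    and m: "m = q*mt" and n: "n = q*nt"
    and TT: "q*T' = m * (n div gcd m n)" and TT': "T' = mt * (nt div gcd mt nt)"
    and mb: "m div gcd m n = mt div gcd mt nt"
    and pA: "\<And>t. A (t + T') = A t" and pB: "\<And>t. B (t + T') = B t"
    and pC: "\<And>t. C (t + T') = C t" and pD: "\<And>t. D (t + T') = D t"
    and cA: "\<And>t. clin (A t)" and cB: "\<And>t. clin (B t)" and cC: "\<And>t. clin (C t)" and cD: "\<And>t. clin (D t)"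
    and z: "z \<in> rho (q*T') (toep (q*T') A)"
  shows "z \<in> rho T' (toep T' A)"
    and "beq m nt (bmult n (htf m n A B C D z) (up q)) (bmult mt (up q) (htf mt nt A B C D z))"
    and "beq mt nt (htf mt nt A B C D z) (bmult m (down q) (bmult n (htf m n A B C D z) (up q)))"
proof -
  define T where "T = q*T'"
  note P = part2_K[where A=A and B=B and C=C and D=D, OF q T' pA pB pC pD cA cB cC cD z]
  show z': "z \<in> rho T' (toep T' A)" by (rule P(1))
  define K where "K = Kof T A B C D z (binv T (MM T A z))"
  define K' where "K' = Kof T' A B C D z (binv T' (MM T' A z))"
  have Koff: "\<And>a b x. a<T \<Longrightarrow> b<T \<Longrightarrow> a mod q \<noteq> b mod q \<Longrightarrow> K a b x = 0"
    unfolding K_def T_def by (rule P(2))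
  have Kon: "\<And>i j. i<T' \<Longrightarrow> j<T' \<Longrightarrow> K (q*i) (q*j) = K' i j"
    unfolding K_def K'_def T_def by (rule P(3))
  have cK: "\<And>a b. clin (K a b)" unfolding K_def
    by (rule clin_Kof[OF cA cB cC cD]) (use rho_binv[OF z[folded T_def]] is_binv_clin in blast)
  have cK': "\<And>a b. clin (K' a b)" unfolding K'_def
    by (rule clin_Kof[OF cA cB cC cD]) (use rho_binv[OF z'] is_binv_clin in blast)
  have TT2: "T = m * (n div gcd m n)" using TT T_def by simp
  have G: "\<And>r k x. htf m n A B C D z r k x = scaleC (1 / of_nat (m div gcd m n))
    (\<Sum>a<T. if a mod m = r then (\<Sum>b<T. if b mod n = k then K a b x else 0) else 0)"
    unfolding K_def by (rule htf_expand[OF TT2]) (use cK K_def in simp)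
  have G': "\<And>r k x. htf mt nt A B C D z r k x = scaleC (1 / of_nat (m div gcd m n))
    (\<Sum>a<T'. if a mod mt = r then (\<Sum>b<T'. if b mod nt = k then K' a b x else 0) else 0)"
    unfolding K'_def mb by (rule htf_expand[OF TT']) (use cK' K'_def in simp)
  have K0: "\<And>a b. K a b 0 = 0" by (rule clin_zero[OF cK])
  have G0: "\<And>r k. htf m n A B C D z r k 0 = 0"
  proof -
    fix r k
    show "htf m n A B C D z r k 0 = 0" unfolding G K0 by (simp only: if_cancel sum.neutral_const scaleC_zero_right)
  qed
  have qm: "q dvd m" and qn: "q dvd n" using m n by auto
  have claim: "bmult n (htf m n A B C D z) (up q) r l x = bmult mt (up q) (htf mt nt A B C D z) r l x"
    if r: "r < m" and l: "l < nt" for r l x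
  proof -
    have ql: "q*l < n" using l n q by simp
    have L: "bmult n (htf m n A B C D z) (up q) r l x = htf m n A B C D z r (q*l) x"
    proof -
      have "bmult n (htf m n A B C D z) (up q) r l x = (\<Sum>k<n. if k = q*l then htf m n A B C D z r k x else 0)"
        unfolding bmult_apply up_def by (rule sum.cong) (auto simp: G0)
      also have "\<dots> = htf m n A B C D z r (q*l) x" using ql by (simp add: sum.delta)
      finally show ?thesis .
    qed
    have bq: "\<And>b. b mod n = q*l \<Longrightarrow> b mod q = 0"
      by (metis qn mod_mod_cancel mod_mult_self1_is_0)
    show ?thesis
    proof (cases "q dvd r")
      case False
      have "(\<Sum>a<T. if a mod m = r then (\<Sum>b<T. if b mod n = q*l then K a b x else 0) else 0) = (\<Sum>a<T. 0)"
      proof (rule sum.cong[OF refl])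
        fix a assume a: "a \<in> {..<T}"
        have "a mod m = r \<Longrightarrow> a mod q \<noteq> 0"
          using False qm by (metis dvd_eq_mod_eq_0 mod_mod_cancel)
        then show "(if a mod m = r then (\<Sum>b<T. if b mod n = q*l then K a b x else 0) else 0) = 0"
          using a Koff bq by (auto intro!: sum.neutral)
      qed
      then have "htf m n A B C D z r (q*l) x = 0" unfolding G by (simp add: scaleC_zero_right)
      moreover have "bmult mt (up q) (htf mt nt A B C D z) r l x = 0"
        unfolding bmult_apply up_def using False by (auto intro!: sum.neutral)
      ultimately show ?thesis using L by simp
    next
      case True
      then obtain r' where r': "r = q*r'" by blast
      have r'm: "r' < mt" using r r' m q by simp
      have R: "bmult mt (up q) (htf mt nt A B C D z) r l x = htf mt nt A B C D z r' l x"
      proof -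
        have "bmult mt (up q) (htf mt nt A B C D z) r l x = (\<Sum>k<mt. if k = r' then htf mt nt A B C D z k l x else 0)"
          unfolding bmult_apply up_def r' using q by (intro sum.cong) auto
        also have "\<dots> = htf mt nt A B C D z r' l x" using r'm by (simp add: sum.delta)
        finally show ?thesis .
      qed
      have inner: "(\<Sum>b<T. if b mod n = q*l then K (q*i) b x else 0) = (\<Sum>j<T'. if j mod nt = l then K' i j x else 0)"
        if i: "i < T'" for i
      proof -
        have "(\<Sum>b<q*T'. if b mod n = q*l then K (q*i) b x else 0) = (\<Sum>j<T'. if (q*j) mod n = q*l then K (q*i) (q*j) x else 0)"
          by (rule sum_mult_q[OF q]) (use bq in \<open>auto simp: dvd_eq_mod_eq_0\<close>)
        also have "\<dots> = (\<Sum>j<T'. if j mod nt = l then K' i j x else 0)"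
          by (rule sum.cong[OF refl]) (use q i Kon in \<open>auto simp: n mod_mult_mult1\<close>)
        finally show ?thesis unfolding T_def .
      qed
      have "(\<Sum>a<T. if a mod m = r then (\<Sum>b<T. if b mod n = q*l then K a b x else 0) else 0)
        = (\<Sum>i<T'. if (q*i) mod m = r then (\<Sum>b<T. if b mod n = q*l then K (q*i) b x else 0) else 0)"
        unfolding T_def
        by (rule sum_mult_q[OF q]) (use qm True in \<open>auto simp: dvd_eq_mod_eq_0 mod_mod_cancel\<close>)
      also have "\<dots> = (\<Sum>i<T'. if i mod mt = r' then (\<Sum>j<T'. if j mod nt = l then K' i j x else 0) else 0)"
        by (rule sum.cong[OF refl]) (use q inner in \<open>auto simp: m r' mod_mult_mult1\<close>)
      finally have "htf m n A B C D z r (q*l) x = htf mt nt A B C D z r' l x"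
        unfolding G G' by simp
      then show ?thesis using L R by simp
    qed
  qed
  show "beq m nt (bmult n (htf m n A B C D z) (up q)) (bmult mt (up q) (htf mt nt A B C D z))"
    unfolding beq_def using claim by blast
  show "beq mt nt (htf mt nt A B C D z) (bmult m (down q) (bmult n (htf m n A B C D z) (up q)))"
    unfolding beq_def
  proof (intro allI impI ext)
    fix r l x assume r: "r < mt" and l: "l < nt"
    have qr: "q*r < m" using r m q by simp
    have "bmult m (down q) (bmult n (htf m n A B C D z) (up q)) r l x
        = bmult n (htf m n A B C D z) (up q) (q*r) l x"
      unfolding bmult_apply[of m] down_def using qr by (simp add: sum.delta)
    also have "\<dots> = bmult mt (up q) (htf mt nt A B C D z) (q*r) l x" by (rule claim[OF qr l])
    also have "\<dots> = (\<Sum>k<mt. if k = r then htf mt nt A B C D z k l x else 0)"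
      unfolding bmult_apply up_def using q by (intro sum.cong) auto
    also have "\<dots> = htf mt nt A B C D z r l x" using r by (simp add: sum.delta)
    finally show "htf mt nt A B C D z r l x = bmult m (down q) (bmult n (htf m n A B C D z) (up q)) r l x" by simp
  qed
qed



theorem theorem8:
  fixes A :: "nat \<Rightarrow> 'x::{chilbert,second_countable_topology} \<Rightarrow> 'x"
    and B :: "nat \<Rightarrow> 'u::{chilbert,second_countable_topology} \<Rightarrow> 'x"
    and C :: "nat \<Rightarrow> 'x \<Rightarrow> 'y::{chilbert,second_countable_topology}"
    and D :: "nat \<Rightarrow> 'u \<Rightarrow> 'y"
    and m n :: nat
  assumes sys: "multirate m n A B C D"
  defines "c \<equiv> gcd m n"
  defines "mb \<equiv> m div c" and "nb \<equiv> n div c"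
  defines "T \<equiv> m * nb"
  defines "\<epsilon> \<equiv> exp (2 * of_real pi * \<i> / of_nat T)"
  shows "(\<forall>z\<in>rho T (toep T A). \<forall>k<m. \<forall>l<n.
            z / \<epsilon> ^ l \<in> rho T (toep T A) \<and>
            htf m n A B C D z k l = htf m n A B C D (z / \<epsilon> ^ l) (nat ((int k - int l) mod int m)) 0)
       \<and> (\<forall>ct mt nt q. ct > 0 \<and> ct dvd c \<and> q = c div ct \<and> mt = ct * mb \<and> nt = ct * nb \<and>
            multirate mt nt A B C D \<longrightarrow>
            rho T (toep T A) \<subseteq> rho (mt * nb) (toep (mt * nb) A) \<and>
            (\<forall>z\<in>rho T (toep T A).
               beq m nt (bmult n (htf m n A B C D z) (up q)) (bmult mt (up q) (htf mt nt A B C D z)) \<and>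
               beq mt nt (htf mt nt A B C D z) (bmult m (down q) (bmult n (htf m n A B C D z) (up q)))))"
proof -
  have m0: "m > 0" and n0: "n > 0" using sys unfolding multirate_def by auto
  have bA: "\<And>t. clin (A t)" and bB: "\<And>t. clin (B t)" and bC: "\<And>t. clin (C t)" and bD: "\<And>t. clin (D t)"
    using sys unfolding multirate_def Let_def by (auto intro: bcl_clin)
  have TT: "T = m * (n div gcd m n)" unfolding T_def nb_def c_def ..
  show ?thesis
  proof (intro conjI ballI allI impI)
    fix z k l assume z: "z \<in> rho T (toep T A)" and k: "k < m" and l: "l < n"
    note P1 = part1_htf[where A=A and B=B and C=C and D=D, OF m0 n0 bA bB bC bD TT z k l]
    show "z / \<epsilon> ^ l \<in> rho T (toep T A)" using P1 unfolding \<epsilon>_def by blast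
    show "htf m n A B C D z k l = htf m n A B C D (z / \<epsilon> ^ l) (nat ((int k - int l) mod int m)) 0"
      using P1 unfolding \<epsilon>_def by blast
  next
    fix ct mt nt q
    assume H: "0 < ct \<and> ct dvd c \<and> q = c div ct \<and> mt = ct * mb \<and> nt = ct * nb \<and> multirate mt nt A B C D"
    then have ct: "ct > 0" and ctc: "ct dvd c" and qd: "q = c div ct" and mtd: "mt = ct * mb"
      and ntd: "nt = ct * nb" and sys2: "multirate mt nt A B C D" by auto
    have c0: "c > 0" unfolding c_def using m0 by simp
    have cm: "c dvd m" and cn: "c dvd n" unfolding c_def by auto
    have cq: "c = q * ct" using qd ctc by simp
    have q0: "q > 0" using cq c0 by (cases q) auto
    have mb0: "mb > 0" unfolding mb_def using cm c0 m0 by (simp add: div_greater_zero_iff dvd_imp_le)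
    have nb0: "nb > 0" unfolding nb_def using cn c0 n0 by (simp add: div_greater_zero_iff dvd_imp_le)
    have mc: "m = c * mb" unfolding mb_def using cm by simp
    have nc: "n = c * nb" unfolding nb_def using cn by simp
    have m: "m = q * mt" using mc cq mtd by simp
    have n: "n = q * nt" using nc cq ntd by simp
    have cop: "gcd mb nb = 1" unfolding mb_def nb_def c_def
      using div_gcd_coprime[of m n] m0 by (simp add: coprime_iff_gcd_eq_1)
    have gt: "gcd mt nt = ct" unfolding mtd ntd using cop by (simp add: gcd_mult_distrib_nat[symmetric])
    have TT': "mt * nb = mt * (nt div gcd mt nt)" using gt ntd ct by simp
    have TTq: "q * (mt * nb) = m * (n div gcd m n)"
    proof -
      have "q * (mt * nb) = (q * mt) * nb" by (simp only: mult.assoc)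
      also have "\<dots> = m * nb" using m by simp
      also have "\<dots> = m * (n div gcd m n)" unfolding nb_def c_def ..
      finally show ?thesis .
    qed
    have mbe: "m div gcd m n = mt div gcd mt nt" using gt mtd ct mb_def c_def by simp
    have per: "\<And>t. A (t + mt * nb) = A t \<and> B (t + mt * nb) = B t \<and> C (t + mt * nb) = C t \<and> D (t + mt * nb) = D t"
      using sys2 TT' unfolding multirate_def Let_def by metis
    have mt0: "mt > 0" and nt0: "nt > 0" using mtd ntd ct mb0 nb0 by auto
    have T'0: "mt * nb > 0" using mt0 nb0 by simp
    have Tq: "T = q * (mt * nb)" using TTq TT by (simp only:)
    note P2 = part2_htf[where A=A and B=B and C=C and D=D, OF q0 T'0 mt0 nt0 m n TTq TT' mbe
        conjunct1[OF per] conjunct1[OF conjunct2[OF per]] conjunct1[OF conjunct2[OF conjunct2[OF per]]]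
        conjunct2[OF conjunct2[OF conjunct2[OF per]]] bA bB bC bD]
    show "rho T (toep T A) \<subseteq> rho (mt * nb) (toep (mt * nb) A)"
      using P2(1) unfolding Tq by blast
    fix z assume z: "z \<in> rho T (toep T A)"
    show "beq m nt (bmult n (htf m n A B C D z) (up q)) (bmult mt (up q) (htf mt nt A B C D z))"
      using P2(2) z unfolding Tq by blast
    show "beq mt nt (htf mt nt A B C D z) (bmult m (down q) (bmult n (htf m n A B C D z) (up q)))"
      using P2(3) z unfolding Tq by blast
  qed
qed


end
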